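(* Let $L\ge1$ and $\Gamma^0\in\{0,1\}^L$ (coordinates indexed by $\mathbb{Z}/L\mathbb{Z}$, viewed as a cycle). Color the positions so that each maximal cyclic interval (run) of equal values in $\Gamma^0$ receives its own distinct color, and run the following colored copying process $\tilde\Gamma^i$: given $\tilde\Gamma^i$, choose a permutation $\sigma$ of $\{0,\dots,L-1\}$ uniformly at random, set $\Delta_0=\tilde\Gamma^i$, and for $1\le j\le L$ let $\Delta_j$ be obtained from $\Delta_{j-1}$ by giving position $\sigma(j-1)$ the current color of position $(\sigma(j-1)+1)\bmod L$ (all other positions unchanged); set $\tilde\Gamma^{i+1}=\Delta_L$. Fix one color and let $X_i$ be the number of positions of that color in $\tilde\Gamma^i$. Then $(X_i)_{i\ge0}$ is a martingale with respect to the filtration generated by $(\tilde\Gamma^i)_{i\ge0}$. *)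

theory Defs
  imports "HOL-Probability.Probability" "HOL-Combinatorics.Permutations"
begin

text \<open>Positions of the cycle Z/LZ are represented by the naturals 0..<L.
  A (colored) configuration is a function nat => 'c; only positions < L matter.\<close>

definition fwd_const_arc :: "nat \<Rightarrow> (nat \<Rightarrow> 'a) \<Rightarrow> nat \<Rightarrow> nat \<Rightarrow> bool" where
  "fwd_const_arc L g x y \<longleftrightarrow>
     (\<exists>d<L. (x + d) mod L = y \<and> (\<forall>t\<le>d. g ((x + t) mod L) = g x))"

definition same_run :: "nat \<Rightarrow> (nat \<Rightarrow> 'a) \<Rightarrow> nat \<Rightarrow> nat \<Rightarrow> bool" where
  "same_run L g x y \<longleftrightarrow> fwd_const_arc L g x y \<or> fwd_const_arc L g y x"

definition run_coloring :: "nat \<Rightarrow> (nat \<Rightarrow> 'a) \<Rightarrow> (nat \<Rightarrow> 'c) \<Rightarrow> bool" where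
  "run_coloring L g col \<longleftrightarrow> (\<forall>x<L. \<forall>y<L. col x = col y \<longleftrightarrow> same_run L g x y)"

definition copy_step :: "nat \<Rightarrow> (nat \<Rightarrow> 'c) \<Rightarrow> nat \<Rightarrow> (nat \<Rightarrow> 'c)" where
  "copy_step L D p = D(p := D (Suc p mod L))"

definition sweep :: "nat \<Rightarrow> (nat \<Rightarrow> nat) \<Rightarrow> (nat \<Rightarrow> 'c) \<Rightarrow> (nat \<Rightarrow> 'c)" where
  "sweep L \<sigma> G = foldl (\<lambda>D j. copy_step L D (\<sigma> j)) G [0..<L]"

definition step_pmf :: "nat \<Rightarrow> (nat \<Rightarrow> 'c) \<Rightarrow> (nat \<Rightarrow> 'c) pmf" where
  "step_pmf L G = map_pmf (\<lambda>\<sigma>. sweep L \<sigma> G) (pmf_of_set {\<sigma>. \<sigma> permutes {0..<L}})"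

text \<open>Joint law of the history (G^0, ..., G^n), as a list of length n+1.\<close>
fun traj :: "nat \<Rightarrow> (nat \<Rightarrow> 'c) \<Rightarrow> nat \<Rightarrow> (nat \<Rightarrow> 'c) list pmf" where
  "traj L G0 0 = return_pmf [G0]"
| "traj L G0 (Suc n) =
     bind_pmf (traj L G0 n) (\<lambda>h. map_pmf (\<lambda>g. h @ [g]) (step_pmf L (last h)))"

definition count_col :: "nat \<Rightarrow> 'c \<Rightarrow> (nat \<Rightarrow> 'c) \<Rightarrow> nat" where
  "count_col L a G = card {k \<in> {0..<L}. G k = a}"

text \<open>Martingale property of X(G^i) w.r.t. the natural filtration of a discrete
  process whose history laws are P n (lists of length n+1): since the filtration F_n
  is generated by the countably-valued history (G^0..G^n), E[X_{n+1} | F_n] = X_n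
  amounts to E[(X_{n+1} - X_n) 1_{history = h0}] = 0 for every history h0.
  (Integrability and adaptedness are automatic here: finitely supported laws,
  X_n a function of G^n.)\<close>
definition history_martingale :: "(nat \<Rightarrow> 's list pmf) \<Rightarrow> ('s \<Rightarrow> real) \<Rightarrow> bool" where
  "history_martingale P X \<longleftrightarrow>
     (\<forall>n h0. measure_pmf.expectation (P (Suc n))
        (\<lambda>h. (X (h ! Suc n) - X (h ! n)) * indicator {h. take (Suc n) h = h0} h) = 0)"

end

theory Submission
  imports Defs
begin

lemma copy_step_comp: "copy_step L (G \<circ> h) p = G \<circ> copy_step L h p"
  by (auto simp: copy_step_def)

lemma foldl_comp:
  "foldl (\<lambda>D j. copy_step L D (\<sigma> j)) (G \<circ> h) xs = G \<circ> foldl (\<lambda>D j. copy_step L D (\<sigma> j)) h xs"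
  by (induction xs arbitrary: h) (auto simp: copy_step_comp)

lemma sweep_comp: "sweep L \<sigma> (G \<circ> h) = G \<circ> sweep L \<sigma> h"
  unfolding sweep_def by (rule foldl_comp)

lemma sweep_id: "sweep L \<sigma> G = G \<circ> sweep L \<sigma> (\<lambda>x. x)"
  using sweep_comp[of L \<sigma> G "\<lambda>x. x"] by (simp add: o_def)

lemma foldl_range:
  assumes "L \<ge> 1" "\<forall>x<L. D x < L"
  shows "\<forall>x<L. foldl (\<lambda>D j. copy_step L D (\<sigma> j)) D xs x < L"
  using assms(2)
proof (induction xs arbitrary: D)
  case Nil then show ?case by simp
next
  case (Cons a xs)
  have "\<forall>x<L. copy_step L D (\<sigma> a) x < L"
    using Cons.prems assms(1) by (auto simp: copy_step_def)
  then show ?case using Cons.IH by simp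
qed

lemma sweep_range: "L \<ge> 1 \<Longrightarrow> x < L \<Longrightarrow> sweep L \<sigma> (\<lambda>x. x) x < L"
  unfolding sweep_def using foldl_range[of L "\<lambda>x. x" \<sigma>] by auto

definition rot :: "nat \<Rightarrow> nat \<Rightarrow> nat" where
  "rot L x = (if x < L then Suc x mod L else x)"

lemma rot_lt: "L \<ge> 1 \<Longrightarrow> x < L \<Longrightarrow> rot L x < L"
  by (simp add: rot_def)

lemma rot_inj: "x < L \<Longrightarrow> y < L \<Longrightarrow> rot L x = rot L y \<longleftrightarrow> x = y"
  unfolding rot_def by (auto simp: mod_if split: if_splits)

lemma rot_permutes: "L \<ge> 1 \<Longrightarrow> rot L permutes {0..<L}"
proof -
  assume L: "L \<ge> 1"
  have "bij_betw (rot L) {0..<L} {0..<L}"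
  proof (rule bij_betw_imageI)
    show "inj_on (rot L) {0..<L}" by (auto simp: inj_on_def rot_inj)
    show "rot L ` {0..<L} = {0..<L}"
    proof
      show "rot L ` {0..<L} \<subseteq> {0..<L}" using L rot_lt by auto
      show "{0..<L} \<subseteq> rot L ` {0..<L}"
      proof
        fix y assume y: "y \<in> {0..<L}"
        show "y \<in> rot L ` {0..<L}"
        proof (cases y)
          case 0
          then have "rot L (L - 1) = y" using L by (simp add: rot_def)
          then show ?thesis using L by force
        next
          case (Suc z)
          then have "rot L z = y" using y by (simp add: rot_def)
          moreover have "z \<in> {0..<L}" using Suc y by auto
          ultimately show ?thesis by blast
        qed
      qed
    qed
  qed
  then show ?thesis
    by (rule bij_imp_permutes) (simp add: rot_def)
qed

lemma foldl_rot:
  assumes L: "L \<ge> 1" and \<sigma>: "\<sigma> permutes {0..<L}" and n: "n \<le> L"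
  shows "\<forall>x<L. foldl (\<lambda>D j. copy_step L D ((rot L \<circ> \<sigma>) j)) D [0..<n] (rot L x)
             = foldl (\<lambda>D j. copy_step L D (\<sigma> j)) (D \<circ> rot L) [0..<n] x"
  using n
proof (induction n)
  case 0 then show ?case by simp
next
  case (Suc n)
  define A where "A = foldl (\<lambda>D j. copy_step L D ((rot L \<circ> \<sigma>) j)) D [0..<n]"
  define B where "B = foldl (\<lambda>D j. copy_step L D (\<sigma> j)) (D \<circ> rot L) [0..<n]"
  have IH: "\<forall>x<L. A (rot L x) = B x" using Suc by (simp add: A_def B_def o_def)
  have q: "\<sigma> n < L" using permutes_in_image[OF \<sigma>, of n] Suc.prems by auto
  have rq: "rot L (\<sigma> n) = Suc (\<sigma> n) mod L" using q by (simp add: rot_def)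
  have "\<forall>x<L. copy_step L A (rot L (\<sigma> n)) (rot L x) = copy_step L B (\<sigma> n) x"
  proof (intro allI impI)
    fix x assume x: "x < L"
    show "copy_step L A (rot L (\<sigma> n)) (rot L x) = copy_step L B (\<sigma> n) x"
    proof (cases "x = \<sigma> n")
      case True
      have "Suc (rot L (\<sigma> n)) mod L = rot L (Suc (\<sigma> n) mod L)"
        using rot_lt[OF L q] q L by (simp add: rot_def)
      moreover have "Suc (\<sigma> n) mod L < L" using L by simp
      ultimately show ?thesis using True IH by (simp add: copy_step_def)
    next
      case False
      then have "rot L x \<noteq> rot L (\<sigma> n)" using rot_inj x q by blast
      then show ?thesis using False IH x by (simp add: copy_step_def)
    qed
  qed
  then show ?case unfolding A_def B_def by (simp add: o_def)
qed

lemma sweep_rot: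
  assumes L: "L \<ge> 1" and \<sigma>: "\<sigma> permutes {0..<L}" and x: "x < L"
  shows "sweep L (rot L \<circ> \<sigma>) (\<lambda>x. x) (rot L x) = rot L (sweep L \<sigma> (\<lambda>x. x) x)"
proof -
  have "sweep L (rot L \<circ> \<sigma>) (\<lambda>x. x) (rot L x) = sweep L \<sigma> ((\<lambda>x. x) \<circ> rot L) x"
    using foldl_rot[OF L \<sigma> order_refl, of "\<lambda>x. x"] x unfolding sweep_def by blast
  also have "(\<lambda>x. x) \<circ> rot L = rot L \<circ> (\<lambda>x. x)" by auto
  also have "sweep L \<sigma> (rot L \<circ> (\<lambda>x. x)) x = rot L (sweep L \<sigma> (\<lambda>x. x) x)"
    by (simp add: sweep_comp)
  finally show ?thesis .
qed


definition PS :: "nat \<Rightarrow> (nat \<Rightarrow> nat) set" where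
  "PS L = {\<sigma>. \<sigma> permutes {0..<L}}"

definition SS :: "nat \<Rightarrow> nat \<Rightarrow> nat \<Rightarrow> nat" where
  "SS L x y = (\<Sum>\<sigma>\<in>PS L. if sweep L \<sigma> (\<lambda>x. x) x = y then 1 else 0)"

lemma PS_finite: "finite (PS L)"
  unfolding PS_def by (rule finite_permutations) simp

lemma PS_ne: "PS L \<noteq> {}"
  unfolding PS_def using permutes_id by blast

lemma rot_bij_PS:
  assumes L: "L \<ge> 1"
  shows "bij_betw (\<lambda>\<sigma>. rot L \<circ> \<sigma>) (PS L) (PS L)"
proof (rule bij_betw_imageI)
  have r: "rot L permutes {0..<L}" using rot_permutes[OF L] .
  show "inj_on (\<lambda>\<sigma>. rot L \<circ> \<sigma>) (PS L)"
  proof (rule inj_onI)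
    fix \<sigma> \<tau> assume "rot L \<circ> \<sigma> = rot L \<circ> \<tau>"
    then have "\<forall>z. rot L (\<sigma> z) = rot L (\<tau> z)" by (metis comp_apply)
    then show "\<sigma> = \<tau>" using permutes_inj[OF r] by (auto simp: inj_eq fun_eq_iff)
  qed
  show "(\<lambda>\<sigma>. rot L \<circ> \<sigma>) ` PS L = PS L"
  proof
    show "(\<lambda>\<sigma>. rot L \<circ> \<sigma>) ` PS L \<subseteq> PS L"
      using r by (auto simp: PS_def intro: permutes_compose)
    show "PS L \<subseteq> (\<lambda>\<sigma>. rot L \<circ> \<sigma>) ` PS L"
    proof
      fix \<tau> assume t: "\<tau> \<in> PS L"
      have "inv (rot L) \<circ> \<tau> \<in> PS L"
        using t permutes_inv[OF r] by (auto simp: PS_def intro: permutes_compose)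
      moreover have "rot L \<circ> (inv (rot L) \<circ> \<tau>) = \<tau>"
        using permutes_inv_o(1)[OF r] by (simp add: o_assoc)
      ultimately show "\<tau> \<in> (\<lambda>\<sigma>. rot L \<circ> \<sigma>) ` PS L" by (metis image_eqI)
    qed
  qed
qed

lemma SS_rot:
  assumes L: "L \<ge> 1" and x: "x < L" and y: "y < L"
  shows "SS L (rot L x) (rot L y) = SS L x y"
proof -
  have "SS L (rot L x) (rot L y) =
     (\<Sum>\<sigma>\<in>PS L. if sweep L (rot L \<circ> \<sigma>) (\<lambda>x. x) (rot L x) = rot L y then 1 else 0)"
    unfolding SS_def
    by (rule sum.reindex_bij_betw[OF rot_bij_PS[OF L], symmetric])
  also have "\<dots> = SS L x y"
    unfolding SS_def
  proof (rule sum.cong[OF refl])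
    fix \<sigma> assume s: "\<sigma> \<in> PS L"
    then have sp: "\<sigma> permutes {0..<L}" by (simp add: PS_def)
    have "sweep L (rot L \<circ> \<sigma>) (\<lambda>x. x) (rot L x) = rot L (sweep L \<sigma> (\<lambda>x. x) x)"
      by (rule sweep_rot[OF L sp x])
    moreover have "sweep L \<sigma> (\<lambda>x. x) x < L" by (rule sweep_range[OF L x])
    ultimately show "(if sweep L (rot L \<circ> \<sigma>) (\<lambda>x. x) (rot L x) = rot L y then 1 else 0) =
         (if sweep L \<sigma> (\<lambda>x. x) x = y then 1 else (0::nat))"
      using rot_inj y by auto
  qed
  finally show ?thesis .
qed

definition TT :: "nat \<Rightarrow> nat \<Rightarrow> nat" where
  "TT L y = (\<Sum>x\<in>{0..<L}. SS L x y)"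

lemma TT_rot:
  assumes L: "L \<ge> 1" and y: "y < L"
  shows "TT L (rot L y) = TT L y"
proof -
  have b: "bij_betw (rot L) {0..<L} {0..<L}"
    using permutes_imp_bij[OF rot_permutes[OF L]] .
  have "TT L (rot L y) = (\<Sum>x\<in>{0..<L}. SS L (rot L x) (rot L y))"
    unfolding TT_def by (rule sum.reindex_bij_betw[OF b, symmetric])
  also have "\<dots> = TT L y"
    unfolding TT_def using SS_rot[OF L _ y] by (intro sum.cong) auto
  finally show ?thesis .
qed

lemma TT_const:
  assumes L: "L \<ge> 1"
  shows "TT L (k mod L) = TT L 0"
proof (induction k)
  case 0 then show ?case by simp
next
  case (Suc k)
  have "rot L (k mod L) = Suc k mod L"
    using L by (simp add: rot_def mod_Suc_eq)
  then show ?case using TT_rot[OF L, of "k mod L"] Suc L by simp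
qed

lemma sum_SS:
  assumes L: "L \<ge> 1" and x: "x < L"
  shows "(\<Sum>y\<in>{0..<L}. SS L x y) = card (PS L)"
proof -
  have "(\<Sum>y\<in>{0..<L}. SS L x y)
      = (\<Sum>\<sigma>\<in>PS L. \<Sum>y\<in>{0..<L}. if sweep L \<sigma> (\<lambda>x. x) x = y then 1 else 0)"
    unfolding SS_def by (rule sum.swap)
  also have "\<dots> = (\<Sum>\<sigma>\<in>PS L. 1)"
    using sweep_range[OF L x] by (intro sum.cong) (auto simp: sum.delta)
  finally show ?thesis by simp
qed

lemma TT_card:
  assumes L: "L \<ge> 1" and y: "y < L"
  shows "TT L y = card (PS L)"
proof -
  have "(\<Sum>y\<in>{0..<L}. TT L y) = (\<Sum>x\<in>{0..<L}. \<Sum>y\<in>{0..<L}. SS L x y)"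
    unfolding TT_def by (rule sum.swap)
  also have "\<dots> = L * card (PS L)" using sum_SS[OF L] by simp
  finally have 1: "(\<Sum>y\<in>{0..<L}. TT L y) = L * card (PS L)" .
  have "(\<Sum>y\<in>{0..<L}. TT L y) = (\<Sum>y\<in>{0..<L}. TT L 0)"
    using TT_const[OF L] by (intro sum.cong) (auto, metis mod_less)
  then have "L * TT L 0 = L * card (PS L)" using 1 by (simp only: sum_constant atLeastLessThan_iff card_atLeastLessThan) simp
  then have "TT L 0 = card (PS L)" using L by auto
  then show ?thesis using TT_const[OF L, of y] y by simp
qed

lemma sum_count:
  assumes L: "L \<ge> 1"
  shows "(\<Sum>\<sigma>\<in>PS L. count_col L a (sweep L \<sigma> G)) = card (PS L) * count_col L a G"
proof -
  define F where "F \<sigma> = sweep L \<sigma> (\<lambda>x. x)" for \<sigma>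
  define c where "c y = (if G y = a then 1 else (0::nat))" for y
  have cnt: "count_col L a H = (\<Sum>k\<in>{0..<L}. if H k = a then 1 else 0)" for H
    unfolding count_col_def by (simp add: sum.inter_filter[symmetric])
  have "(\<Sum>\<sigma>\<in>PS L. count_col L a (sweep L \<sigma> G))
      = (\<Sum>\<sigma>\<in>PS L. \<Sum>k\<in>{0..<L}. c (F \<sigma> k))"
    unfolding cnt c_def F_def by (subst sweep_id) simp
  also have "\<dots> = (\<Sum>\<sigma>\<in>PS L. \<Sum>k\<in>{0..<L}. \<Sum>y\<in>{0..<L}. if F \<sigma> k = y then c y else 0)"
    using sweep_range[OF L] by (intro sum.cong refl) (auto simp: sum.delta F_def)
  also have "\<dots> = (\<Sum>y\<in>{0..<L}. \<Sum>k\<in>{0..<L}. \<Sum>\<sigma>\<in>PS L. if F \<sigma> k = y then c y else 0)"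
    by (simp add: sum.swap[of _ "PS L"] sum.swap[of _ "{0..<L}" "{0..<L}"])
  also have "\<dots> = (\<Sum>y\<in>{0..<L}. c y * TT L y)"
    unfolding TT_def SS_def F_def
    by (intro sum.cong refl) (auto simp: sum_distrib_left if_distrib cong: if_cong)
  also have "\<dots> = (\<Sum>y\<in>{0..<L}. c y * card (PS L))"
    using TT_card[OF L] by (intro sum.cong) auto
  also have "\<dots> = card (PS L) * count_col L a G"
    unfolding cnt c_def by (simp add: sum_distrib_left mult.commute)
  finally show ?thesis .
qed


lemma step_expect:
  assumes L: "L \<ge> 1"
  shows "measure_pmf.expectation (step_pmf L G) (\<lambda>G. real (count_col L a G)) = real (count_col L a G)"
proof -
  have "measure_pmf.expectation (step_pmf L G) (\<lambda>G. real (count_col L a G))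
      = measure_pmf.expectation (pmf_of_set (PS L)) (\<lambda>\<sigma>. real (count_col L a (sweep L \<sigma> G)))"
    unfolding step_pmf_def PS_def by simp
  also have "\<dots> = (\<Sum>\<sigma>\<in>PS L. real (count_col L a (sweep L \<sigma> G))) / card (PS L)"
    by (rule integral_pmf_of_set[OF PS_ne PS_finite])
  also have "\<dots> = real (card (PS L) * count_col L a G) / card (PS L)"
    by (subst sum_count[OF L, symmetric]) simp
  also have "\<dots> = real (count_col L a G)"
    using PS_finite PS_ne by (simp add: card_gt_0_iff)
  finally show ?thesis .
qed

lemma step_set_finite: "finite (set_pmf (step_pmf L G))"
proof -
  have "set_pmf (step_pmf L G) = (\<lambda>\<sigma>. sweep L \<sigma> G) ` PS L"
    unfolding step_pmf_def using PS_finite PS_ne by (simp add: PS_def)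
  then show ?thesis using PS_finite by simp
qed

lemma traj_set: "finite (set_pmf (traj L G0 n)) \<and> (\<forall>h\<in>set_pmf (traj L G0 n). length h = Suc n)"
proof (induction n)
  case 0 then show ?case by simp
next
  case (Suc n)
  have "set_pmf (traj L G0 (Suc n)) =
     (\<Union>h\<in>set_pmf (traj L G0 n). (\<lambda>g. h @ [g]) ` set_pmf (step_pmf L (last h)))"
    by simp
  then show ?case using Suc step_set_finite by auto
qed

theorem lemma3:
  fixes L :: nat and \<Gamma>0 :: "nat \<Rightarrow> bool" and col0 :: "nat \<Rightarrow> 'c" and a :: 'c
  assumes "L \<ge> 1"
    and "run_coloring L \<Gamma>0 col0"
    and "a \<in> col0 ` {0..<L}"
  shows "history_martingale (traj L col0) (\<lambda>G. real (count_col L a G))"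
  unfolding history_martingale_def
proof (intro allI)
  fix n :: nat and h0 :: "(nat \<Rightarrow> 'c) list"
  define X where "X G = real (count_col L a G)" for G :: "nat \<Rightarrow> 'c"
  define f where "f h = (X (h ! Suc n) - X (h ! n)) * indicator {h. take (Suc n) h = h0} h"
    for h :: "(nat \<Rightarrow> 'c) list"
  define A where "A = set_pmf (traj L col0 n)"
  have A: "finite A" "\<And>h. h \<in> A \<Longrightarrow> length h = Suc n"
    using traj_set[of L col0 n] by (auto simp: A_def)
  have "measure_pmf.expectation (traj L col0 (Suc n)) f
     = (\<Sum>h\<in>A. pmf (traj L col0 n) h *\<^sub>R
          measure_pmf.expectation (map_pmf (\<lambda>g. h @ [g]) (step_pmf L (last h))) f)"
    unfolding traj.simps
    using A(1) unfolding A_def by (intro pmf_expectation_bind) (auto simp: step_set_finite)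
  also have "\<dots> = 0"
  proof (rule sum.neutral, intro ballI)
    fix h assume h: "h \<in> A"
    define c where "c = (indicator {h. take (Suc n) h = h0} h :: real)"
    have len: "length h = Suc n" using A(2)[OF h] .
    have fh: "f (h @ [g]) = c * X g - c * X (last h)" for g
    proof -
      have ln: "last h = h ! n" using len by (subst last_conv_nth) auto
      show ?thesis using len unfolding f_def c_def ln
        by (simp add: nth_append indicator_def algebra_simps)
    qed
    have int: "integrable (measure_pmf (step_pmf L (last h))) g" for g :: "_ \<Rightarrow> real"
      by (rule integrable_measure_pmf_finite[OF step_set_finite])
    have "measure_pmf.expectation (map_pmf (\<lambda>g. h @ [g]) (step_pmf L (last h))) f
        = measure_pmf.expectation (step_pmf L (last h)) (\<lambda>g. c * X g - c * X (last h))"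
      by (simp add: fh)
    also have "\<dots> = c * measure_pmf.expectation (step_pmf L (last h)) X - c * X (last h)"
      by (subst Bochner_Integration.integral_diff[OF int int]) simp
    also have "\<dots> = 0"
      using step_expect[OF assms(1), of "last h" a] by (simp add: X_def[abs_def])
    finally show "pmf (traj L col0 n) h *\<^sub>R
        measure_pmf.expectation (map_pmf (\<lambda>g. h @ [g]) (step_pmf L (last h))) f = 0" by simp
  qed
  finally show "measure_pmf.expectation (traj L col0 (Suc n))
      (\<lambda>h. (real (count_col L a (h ! Suc n)) - real (count_col L a (h ! n))) *
           indicator {h. take (Suc n) h = h0} h) = 0"
    by (simp add: f_def[abs_def] X_def)
qed

end
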